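(* Let $F$ be a fixed graph that is not a forest and let $k$ be a fixed positive integer. Then, as $n\to\infty$, \[\mathrm{ex}(n,M_k,F)=(1+o(1))\frac{\mathrm{ex}(n,F)^k}{k!}.\]
   Context: $M_k$ is the matching with $k$ edges. $\mathrm{ex}(n,F)$ is the maximum number of edges in an $F$-free graph on $n$ vertices. For graphs $H,G$, $\mathcal{N}(H,G)$ is the number of subgraphs of $G$ isomorphic to $H$, and $\mathrm{ex}(n,H,F)$ is the maximum of $\mathcal{N}(H,G)$ over $F$-free graphs $G$ on $n$ vertices. *)

theory Defs
  imports Main "HOL-Library.Landau_Symbols"
begin

type_synonym 'a graph = "'a set \<times> 'a set set"

definition graph :: "'a graph \<Rightarrow> bool" where
  "graph G \<longleftrightarrow> finite (fst G) \<and>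
     (\<forall>e\<in>snd G. \<exists>x y. x \<noteq> y \<and> e = {x, y} \<and> x \<in> fst G \<and> y \<in> fst G)"

definition subgraph :: "'a graph \<Rightarrow> 'a graph \<Rightarrow> bool" where
  "subgraph H G \<longleftrightarrow> graph H \<and> fst H \<subseteq> fst G \<and> snd H \<subseteq> snd G"

definition isomorphic :: "'a graph \<Rightarrow> 'b graph \<Rightarrow> bool" where
  "isomorphic G H \<longleftrightarrow> (\<exists>f. bij_betw f (fst G) (fst H) \<and>
     (\<forall>x\<in>fst G. \<forall>y\<in>fst G. {x, y} \<in> snd G \<longleftrightarrow> {f x, f y} \<in> snd H))"

definition count_copies :: "'b graph \<Rightarrow> 'a graph \<Rightarrow> nat" where
  "count_copies H G = card {H'. subgraph H' G \<and> isomorphic H' H}"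

definition F_free :: "'b graph \<Rightarrow> 'a graph \<Rightarrow> bool" where
  "F_free F G \<longleftrightarrow> \<not> (\<exists>H. subgraph H G \<and> isomorphic H F)"

definition graphs_on :: "nat \<Rightarrow> nat graph set" where
  "graphs_on n = {G. graph G \<and> fst G = {0..<n}}"

definition ex :: "nat \<Rightarrow> 'b graph \<Rightarrow> nat" where
  "ex n F = Max ((\<lambda>G. card (snd G)) ` {G \<in> graphs_on n. F_free F G})"

definition ex_gen :: "nat \<Rightarrow> 'c graph \<Rightarrow> 'b graph \<Rightarrow> nat" where
  "ex_gen n H F = Max ((\<lambda>G. count_copies H G) ` {G \<in> graphs_on n. F_free F G})"

definition matching :: "nat \<Rightarrow> nat graph" where
  "matching k = ({0..<2*k}, {{2*i, 2*i+1} | i. i < k})"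

definition has_cycle :: "'a graph \<Rightarrow> bool" where
  "has_cycle G \<longleftrightarrow> (\<exists>vs. length vs \<ge> 3 \<and> distinct vs \<and> set vs \<subseteq> fst G \<and>
     (\<forall>i<length vs. {vs ! i, vs ! ((i + 1) mod length vs)} \<in> snd G))"

definition forest :: "'a graph \<Rightarrow> bool" where
  "forest G \<longleftrightarrow> \<not> has_cycle G"

end

theory Submission
  imports Defs
begin

lemma iso_sym:
  assumes "isomorphic G H" shows "isomorphic H G"
proof -
  obtain f where bij: "bij_betw f (fst G) (fst H)" and
    iso: "\<forall>x\<in>fst G. \<forall>y\<in>fst G. {x, y} \<in> snd G \<longleftrightarrow> {f x, f y} \<in> snd H"
    using assms unfolding isomorphic_def by blast
  let ?g = "inv_into (fst G) f"
  have bg: "bij_betw ?g (fst H) (fst G)" using bij by (rule bij_betw_inv_into)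
  have fg: "f (?g x) = x" if "x \<in> fst H" for x
    using bij that by (meson bij_betw_inv_into_right)
  have "\<forall>x\<in>fst H. \<forall>y\<in>fst H. {x, y} \<in> snd H \<longleftrightarrow> {?g x, ?g y} \<in> snd G"
  proof (intro ballI)
    fix x y assume x: "x \<in> fst H" and y: "y \<in> fst H"
    have gx: "?g x \<in> fst G" and gy: "?g y \<in> fst G" using bg x y bij_betwE by blast+
    show "{x, y} \<in> snd H \<longleftrightarrow> {?g x, ?g y} \<in> snd G"
    proof -
      have "{?g x, ?g y} \<in> snd G \<longleftrightarrow> {f (?g x), f (?g y)} \<in> snd H" using iso gx gy by blast
      then show ?thesis using fg[OF x] fg[OF y] by simp
    qed
  qed
  then show ?thesis unfolding isomorphic_def using bg by blast
qed

definition MM :: "nat \<Rightarrow> nat set set" where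
  "MM k = {{2*i, 2*i+1} | i. i < k}"

lemma snd_matching: "snd (matching k) = MM k" and fst_matching: "fst (matching k) = {0..<2*k}"
  by (auto simp: matching_def MM_def)

lemma card_MM: "card (MM k) = k"
proof -
  have "MM k = (\<lambda>i. {2*i, 2*i+1}) ` {..<k}" by (auto simp: MM_def)
  moreover have "inj_on (\<lambda>i::nat. {2*i, 2*i+1}) {..<k}"
    by (auto simp: inj_on_def doubleton_eq_iff)
  ultimately show ?thesis by (simp add: card_image)
qed

lemma MM_mem: "{a, b} \<in> MM k \<longleftrightarrow> (\<exists>i<k. (a = 2*i \<and> b = 2*i+1) \<or> (a = 2*i+1 \<and> b = 2*i))"
  by (auto simp: MM_def doubleton_eq_iff)

definition partner :: "nat \<Rightarrow> nat" where
  "partner j = (if even j then j + 1 else j - 1)"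

lemma partner_MM: "j < 2*k \<Longrightarrow> {j, partner j} \<in> MM k \<and> partner j < 2*k"
  unfolding partner_def MM_mem
  apply (cases "even j")
   apply (rule conjI, rule exI[of _ "j div 2"], simp, presburger)
  apply (rule conjI, rule exI[of _ "j div 2"], simp, presburger)
  done

lemma copy_struct:
  assumes g: "graph H" and i: "isomorphic H (matching k)"
  shows "card (snd H) = k \<and> fst H = \<Union>(snd H)"
proof -
  obtain f where bij0: "bij_betw f (fst H) (fst (matching k))" and
    iso0: "\<forall>x\<in>fst H. \<forall>y\<in>fst H. {x, y} \<in> snd H \<longleftrightarrow> {f x, f y} \<in> snd (matching k)"
    using i unfolding isomorphic_def by blast
  have bij: "bij_betw f (fst H) {0..<2*k}" using bij0 unfolding fst_matching .
  have iso: "\<forall>x\<in>fst H. \<forall>y\<in>fst H. {x, y} \<in> snd H \<longleftrightarrow> {f x, f y} \<in> MM k"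
    using iso0 unfolding snd_matching .
  let ?g = "inv_into (fst H) f"
  have bg: "bij_betw ?g {0..<2*k} (fst H)" using bij by (rule bij_betw_inv_into)
  have fg: "f (?g x) = x" if "x \<in> {0..<2*k}" for x
    using bij that by (meson bij_betw_inv_into_right)
  have gin: "?g x \<in> fst H" if "x < 2*k" for x using bij_betwE[OF bg] that by simp
  have ed: "\<forall>e\<in>snd H. \<exists>x y. x \<noteq> y \<and> e = {x, y} \<and> x \<in> fst H \<and> y \<in> fst H"
    using g unfolding graph_def by blast
  have sub: "\<forall>e\<in>snd H. e \<subseteq> fst H"
  proof
    fix e assume "e \<in> snd H"
    with ed obtain x y where "e = {x, y}" "x \<in> fst H" "y \<in> fst H" by meson
    then show "e \<subseteq> fst H" by simp
  qed
  have "fst H \<subseteq> \<Union>(snd H)"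
  proof
    fix x assume x: "x \<in> fst H"
    have fx: "f x < 2*k" using bij_betwE[OF bij] x by simp
    have p: "{f x, partner (f x)} \<in> MM k" "partner (f x) < 2*k" using partner_MM[OF fx] by auto
    have "{x, ?g (partner (f x))} \<in> snd H \<longleftrightarrow> {f x, f (?g (partner (f x)))} \<in> MM k"
      using iso x gin[OF p(2)] by blast
    then have "{x, ?g (partner (f x))} \<in> snd H"
      using fg[of "partner (f x)"] p by simp
    then show "x \<in> \<Union>(snd H)" by blast
  qed
  moreover have "\<Union>(snd H) \<subseteq> fst H" using sub by blast
  moreover have "bij_betw ((`) f) (snd H) (MM k)"
  proof (rule bij_betw_imageI)
    have "inj_on f (fst H)" using bij by (rule bij_betw_imp_inj_on)
    note inj = this
    show "inj_on ((`) f) (snd H)"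
    proof (rule inj_onI)
      fix e1 e2 assume "e1 \<in> snd H" "e2 \<in> snd H" "f ` e1 = f ` e2"
      moreover have "e1 \<subseteq> fst H" "e2 \<subseteq> fst H" using sub \<open>e1 \<in> snd H\<close> \<open>e2 \<in> snd H\<close> by auto
      ultimately show "e1 = e2" using inj_on_image_eq_iff[OF inj] by metis
    qed
    show "(`) f ` snd H = MM k"
    proof
      show "(`) f ` snd H \<subseteq> MM k"
      proof
        fix m assume "m \<in> (`) f ` snd H"
        then obtain e where e: "e \<in> snd H" "m = f ` e" by blast
        then obtain x y where "e = {x, y}" "x \<in> fst H" "y \<in> fst H" using ed by meson
        moreover have "{x, y} \<in> snd H \<longleftrightarrow> {f x, f y} \<in> MM k" using iso \<open>x \<in> fst H\<close> \<open>y \<in> fst H\<close> by blast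
        ultimately show "m \<in> MM k" using e by simp
      qed
      show "MM k \<subseteq> (`) f ` snd H"
      proof
        fix m assume m: "m \<in> MM k"
        then obtain i where i: "i < k" "m = {2*i, 2*i+1}" by (auto simp: MM_def)
        let ?x = "?g (2*i)" and ?y = "?g (2*i+1)"
        have "{?x, ?y} \<in> snd H \<longleftrightarrow> {f ?x, f ?y} \<in> MM k" using iso gin[of "2*i"] gin[of "2*i+1"] i by simp
        then have "{?x, ?y} \<in> snd H" using fg[of "2*i"] fg[of "2*i+1"] i m by simp
        moreover have "f ` {?x, ?y} = m" using fg[of "2*i"] fg[of "2*i+1"] i by auto
        ultimately show "m \<in> (`) f ` snd H" by blast
      qed
    qed
  qed
  then have "card (snd H) = card (MM k)" by (rule bij_betw_same_card)
  ultimately show ?thesis using card_MM[of k] by simp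
qed


lemma graph_edges:
  assumes "graph G" "e \<in> snd G"
  obtains x y where "x \<noteq> y" "e = {x, y}" "x \<in> fst G" "y \<in> fst G"
  using assms unfolding graph_def by meson

lemma graph_snd_sub: "graph G \<Longrightarrow> snd G \<subseteq> Pow (fst G)"
proof
  fix e assume g: "graph G" and e: "e \<in> snd G"
  obtain x y where "e = {x, y}" "x \<in> fst G" "y \<in> fst G" using graph_edges[OF g e] by metis
  then show "e \<in> Pow (fst G)" by simp
qed

lemma graph_finite_snd: "graph G \<Longrightarrow> finite (snd G)"
  using graph_snd_sub[of G] unfolding graph_def by (meson finite_Pow_iff finite_subset)

lemma matching_is_copy:
  assumes gG: "graph G" and T: "T \<subseteq> snd G" "card T = k"
    and disj: "\<forall>e1\<in>T. \<forall>e2\<in>T. e1 \<noteq> e2 \<longrightarrow> e1 \<inter> e2 = {}"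
  shows "subgraph (\<Union>T, T) G \<and> isomorphic (\<Union>T, T) (matching k)"
proof -
  have finT: "finite T" using graph_finite_snd[OF gG] T(1) finite_subset by blast
  have Tsub: "\<Union>T \<subseteq> fst G" using graph_snd_sub[OF gG] T(1) by blast
  have "finite (fst G)" using gG unfolding graph_def by simp
  then have finU: "finite (\<Union>T)" using Tsub by (rule finite_subset[rotated])
  have edT: "\<exists>x y. x \<noteq> y \<and> e = {x, y}" if "e \<in> T" for e
    using graph_edges[OF gG, of e] that T(1) by blast
  have "graph (\<Union>T, T)"
    unfolding graph_def
  proof (intro conjI ballI)
    show "finite (fst (\<Union> T, T))" using finU by simp
    fix e assume "e \<in> snd (\<Union> T, T)"
    then have e: "e \<in> T" by simp
    then obtain x y where xy: "x \<noteq> y" "e = {x, y}" using edT by blast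
    then show "\<exists>x y. x \<noteq> y \<and> e = {x, y} \<and> x \<in> fst (\<Union> T, T) \<and> y \<in> fst (\<Union> T, T)"
      using e by (intro exI[of _ x] exI[of _ y]) auto
  qed
  then have sg: "subgraph (\<Union>T, T) G" unfolding subgraph_def using Tsub T(1) by simp
  obtain g where bg: "bij_betw g {0..<k} T" using ex_bij_betw_nat_finite[OF finT] T(2) by auto
  have ginj: "inj_on g {0..<k}" using bg by (rule bij_betw_imp_inj_on)
  have gin: "g i \<in> T" if "i < k" for i using bij_betwE[OF bg] that by simp
  define pr where "pr e = (SOME p. fst p \<noteq> snd p \<and> e = {fst p, snd p})" for e :: "'a set"
  have prp: "fst (pr e) \<noteq> snd (pr e) \<and> e = {fst (pr e), snd (pr e)}" if eT: "e \<in> T" for e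
  proof -
    obtain x y where "x \<noteq> y" "e = {x, y}" using edT[OF eT] by blast
    then have "\<exists>p. fst p \<noteq> snd p \<and> e = {fst p, snd p}" by (intro exI[of _ "(x, y)"]) simp
    then show ?thesis unfolding pr_def by (rule someI_ex)
  qed
  define h where "h j = (if even j then fst (pr (g (j div 2))) else snd (pr (g (j div 2))))" for j
  have hin: "h j \<in> g (j div 2)" if "j < 2*k" for j
  proof -
    have "j div 2 < k" using that by simp
    then have "g (j div 2) \<in> T" by (rule gin)
    from prp[OF this] show ?thesis unfolding h_def by (cases "even j") (metis insertI1 insertI2 singletonI)+
  qed
  have same: "x div 2 = y div 2" if "x < 2*k" "y < 2*k" "h x \<in> e" "h y \<in> e" "e \<in> T" for x y e
  proof -
    have "x div 2 < k" "y div 2 < k" using that by auto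
    have "g (x div 2) = e"
    proof (rule ccontr)
      assume "g (x div 2) \<noteq> e"
      then have "g (x div 2) \<inter> e = {}" using disj gin[OF \<open>x div 2 < k\<close>] that(5) by simp
      then show False using that(3) hin[OF that(1)] by blast
    qed
    moreover have "g (y div 2) = e"
    proof (rule ccontr)
      assume "g (y div 2) \<noteq> e"
      then have "g (y div 2) \<inter> e = {}" using disj gin[OF \<open>y div 2 < k\<close>] that(5) by simp
      then show False using that(4) hin[OF that(2)] by blast
    qed
    ultimately show ?thesis using ginj \<open>x div 2 < k\<close> \<open>y div 2 < k\<close> unfolding inj_on_def by simp
  qed
  have hbij: "bij_betw h {0..<2*k} (\<Union>T)"
  proof (rule bij_betw_imageI)
    show "inj_on h {0..<2*k}"
    proof (rule inj_onI)
      fix x y assume x: "x \<in> {0..<2*k}" and y: "y \<in> {0..<2*k}" and hxy: "h x = h y"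
      have xk: "x div 2 < k" using x by auto
      have eq: "x div 2 = y div 2"
        using same[of x y "g (x div 2)"] x y hxy hin[of x] gin[OF xk] by simp
      have pe: "fst (pr (g (x div 2))) \<noteq> snd (pr (g (x div 2)))" using prp[OF gin[OF xk]] by blast
      show "x = y"
      proof (cases "even x = even y")
        case True then show ?thesis using eq by presburger
      next
        case False
        show ?thesis
        proof (cases "even x")
          case True
          then have "odd y" using False by simp
          then have "h y = snd (pr (g (x div 2)))" unfolding h_def using eq by simp
          moreover have "h x = fst (pr (g (x div 2)))" unfolding h_def using True by simp
          ultimately show ?thesis using hxy pe by simp
        next
          case c: False
          then have "even y" using False by simp
          then have "h y = fst (pr (g (x div 2)))" unfolding h_def using eq by simp
          moreover have "h x = snd (pr (g (x div 2)))" unfolding h_def using c by simp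
          ultimately show ?thesis using hxy pe by simp
        qed
      qed
    qed
    show "h ` {0..<2*k} = \<Union>T"
    proof
      show "h ` {0..<2*k} \<subseteq> \<Union>T"
      proof
        fix z assume "z \<in> h ` {0..<2*k}"
        then obtain j where j: "j < 2*k" "z = h j" by auto
        then have "j div 2 < k" by auto
        then show "z \<in> \<Union>T" using hin[OF j(1)] gin j by blast
      qed
      show "\<Union>T \<subseteq> h ` {0..<2*k}"
      proof
        fix z assume "z \<in> \<Union>T"
        then obtain e where e: "e \<in> T" "z \<in> e" by blast
        then obtain i where i: "i < k" "e = g i" using bg unfolding bij_betw_def by auto
        have "z = fst (pr e) \<or> z = snd (pr e)" using prp[OF e(1)] e(2) by blast
        then show "z \<in> h ` {0..<2*k}"
        proof
          assume "z = fst (pr e)"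
          then have "z = h (2*i)" unfolding h_def using i by simp
          then show ?thesis using i by (intro image_eqI[of _ _ "2*i"]) auto
        next
          assume "z = snd (pr e)"
          then have "z = h (2*i+1)" unfolding h_def using i by simp
          then show ?thesis using i by (intro image_eqI[of _ _ "2*i+1"]) auto
        qed
      qed
    qed
  qed
  have hiso: "\<forall>x\<in>{0..<2*k}. \<forall>y\<in>{0..<2*k}. {x, y} \<in> MM k \<longleftrightarrow> {h x, h y} \<in> T"
  proof (intro ballI iffI)
    fix x y assume x: "x \<in> {0..<2*k}" and y: "y \<in> {0..<2*k}"
    {
      assume "{x, y} \<in> MM k"
      then obtain i where i: "i < k" "(x = 2*i \<and> y = 2*i+1) \<or> (x = 2*i+1 \<and> y = 2*i)"
        unfolding MM_mem by blast
      have hh: "{h (2*i), h (2*i+1)} = g i" unfolding h_def using prp[OF gin[OF i(1)]] by simp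
      from i(2) have "{h x, h y} = {h (2*i), h (2*i+1)}" by auto
      then show "{h x, h y} \<in> T" using hh gin[OF i(1)] by simp
    }
    {
      assume e: "{h x, h y} \<in> T"
      have xy: "x div 2 = y div 2" by (rule same[OF _ _ _ _ e]) (use x y in auto)
      have "x \<noteq> y"
      proof
        assume "x = y"
        then have "{h x, h y} = {h x}" by simp
        moreover have "{h x, h y} = {fst (pr {h x, h y}), snd (pr {h x, h y})}" "fst (pr {h x, h y}) \<noteq> snd (pr {h x, h y})"
          using prp[OF e] by blast+
        ultimately have q: "{h x} = {fst (pr {h x, h y}), snd (pr {h x, h y})}" "fst (pr {h x, h y}) \<noteq> snd (pr {h x, h y})"
          by simp_all
        have "fst (pr {h x, h y}) \<in> {h x}" "snd (pr {h x, h y}) \<in> {h x}" unfolding q(1) by simp_all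
        then show False using q(2) by simp
      qed
      then have "(x = 2*(x div 2) \<and> y = 2*(x div 2)+1) \<or> (x = 2*(x div 2)+1 \<and> y = 2*(x div 2))"
        using xy by presburger
      moreover have "x div 2 < k" using x by auto
      ultimately show "{x, y} \<in> MM k" unfolding MM_mem by (intro exI[of _ "x div 2"] conjI)
    }
  qed
  have "isomorphic (matching k) (\<Union>T, T)"
    unfolding isomorphic_def fst_matching snd_matching using hbij hiso by (intro exI[of _ h] conjI) simp_all
  then show ?thesis using sg iso_sym by blast
qed

definition copies :: "'b graph \<Rightarrow> nat \<Rightarrow> 'b graph set" where
  "copies G k = {H. subgraph H G \<and> isomorphic H (matching k)}"

definition goodk :: "'b set set \<Rightarrow> nat \<Rightarrow> 'b set set set" where
  "goodk E k = {T. T \<subseteq> E \<and> card T = k \<and> (\<forall>e1\<in>T. \<forall>e2\<in>T. e1 \<noteq> e2 \<longrightarrow> e1 \<inter> e2 = {})}"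

lemma copies_sub:
  assumes "graph G"
  shows "copies G k \<subseteq> (\<lambda>T. (\<Union>T, T)) ` {T. T \<subseteq> snd G \<and> card T = k}"
proof
  fix H assume "H \<in> copies G k"
  then have s: "subgraph H G" and i: "isomorphic H (matching k)" unfolding copies_def by auto
  have "graph H" using s unfolding subgraph_def by simp
  from copy_struct[OF this i] have "card (snd H) = k" "H = (\<Union>(snd H), snd H)"
    by (auto simp: prod_eq_iff)
  moreover have "snd H \<subseteq> snd G" using s unfolding subgraph_def by simp
  ultimately show "H \<in> (\<lambda>T. (\<Union>T, T)) ` {T. T \<subseteq> snd G \<and> card T = k}" by blast
qed

lemma finite_ksets: "finite E \<Longrightarrow> finite {T. T \<subseteq> E \<and> card T = k}"
  by (rule finite_subset[of _ "Pow E"]) auto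

lemma count_upper:
  assumes "graph G"
  shows "count_copies (matching k) G \<le> card (snd G) choose k"
proof -
  have fin: "finite (snd G)" using graph_finite_snd[OF assms] .
  have "count_copies (matching k) G = card (copies G k)" unfolding count_copies_def copies_def by simp
  also have "\<dots> \<le> card ((\<lambda>T. (\<Union>T, T)) ` {T. T \<subseteq> snd G \<and> card T = k})"
    by (rule card_mono[OF finite_imageI[OF finite_ksets[OF fin]] copies_sub[OF assms]])
  also have "\<dots> \<le> card {T. T \<subseteq> snd G \<and> card T = k}" by (rule card_image_le[OF finite_ksets[OF fin]])
  also have "\<dots> = card (snd G) choose k" by (rule n_subsets[OF fin])
  finally show ?thesis .
qed

lemma count_lower:
  assumes "graph G"
  shows "card (goodk (snd G) k) \<le> count_copies (matching k) G"
proof -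
  have fin: "finite (snd G)" using graph_finite_snd[OF assms] .
  have fc: "finite (copies G k)"
    using finite_subset[OF copies_sub[OF assms] finite_imageI[OF finite_ksets[OF fin]]] .
  have "inj_on (\<lambda>T. (\<Union>T, T)) (goodk (snd G) k)" by (auto simp: inj_on_def)
  then have "card (goodk (snd G) k) = card ((\<lambda>T. (\<Union>T, T)) ` goodk (snd G) k)" by (simp add: card_image)
  also have "\<dots> \<le> card (copies G k)"
  proof (rule card_mono[OF fc])
    show "(\<lambda>T. (\<Union>T, T)) ` goodk (snd G) k \<subseteq> copies G k"
    proof
      fix H assume "H \<in> (\<lambda>T. (\<Union>T, T)) ` goodk (snd G) k"
      then obtain T where T: "T \<in> goodk (snd G) k" "H = (\<Union>T, T)" by blast
      from T(1) have "T \<subseteq> snd G" "card T = k" "\<forall>e1\<in>T. \<forall>e2\<in>T. e1 \<noteq> e2 \<longrightarrow> e1 \<inter> e2 = {}"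
        unfolding goodk_def by auto
      from matching_is_copy[OF assms this] show "H \<in> copies G k" unfolding copies_def T(2) by simp
    qed
  qed
  also have "\<dots> = count_copies (matching k) G" unfolding count_copies_def copies_def by simp
  finally show ?thesis .
qed


lemma deg_le:
  assumes ed: "\<forall>e\<in>E. \<exists>x y. x \<noteq> y \<and> e = {x, y} \<and> x \<in> V \<and> y \<in> V" and fV: "finite V"
  shows "card {e\<in>E. v \<in> e} \<le> card V"
proof -
  have "{e\<in>E. v \<in> e} \<subseteq> (\<lambda>y. {v, y}) ` V"
  proof
    fix e assume "e \<in> {e\<in>E. v \<in> e}"
    then have e: "e \<in> E" "v \<in> e" by auto
    then obtain x y where xy: "e = {x, y}" "x \<in> V" "y \<in> V" using ed by meson
    show "e \<in> (\<lambda>y. {v, y}) ` V"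
    proof (cases "v = x")
      case True then show ?thesis using xy by auto
    next
      case False then have "v = y" using e xy by auto
      then show ?thesis using xy by (auto simp: insert_commute)
    qed
  qed
  then have "card {e\<in>E. v \<in> e} \<le> card ((\<lambda>y. {v, y}) ` V)" by (rule card_mono[OF finite_imageI[OF fV]])
  also have "\<dots> \<le> card V" by (rule card_image_le[OF fV])
  finally show ?thesis .
qed

lemma choose_le_pow: "(n choose s) \<le> n ^ s"
proof -
  have "(n choose s) \<le> (n choose s) * fact s" by simp
  also have "\<dots> \<le> n ^ s" by (rule binomial_fact_pow)
  finally show ?thesis .
qed

lemma bad_bound:
  assumes ed: "\<forall>e\<in>E. \<exists>x y. x \<noteq> y \<and> e = {x, y} \<and> x \<in> V \<and> y \<in> V" and fV: "finite V"
    and fE: "finite E" and k: "k \<ge> 2"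
  shows "card ({T. T \<subseteq> E \<and> card T = k} - goodk E k) \<le> 2 * card V * card E * card E ^ (k - 2)"
proof -
  define P where "P = {(e1, e2). e1 \<in> E \<and> e2 \<in> E \<and> e1 \<noteq> e2 \<and> e1 \<inter> e2 \<noteq> {}}"
  define B where "B p = {T. T \<subseteq> E \<and> card T = k \<and> fst p \<in> T \<and> snd p \<in> T}" for p
  have finP: "finite P" unfolding P_def by (rule finite_subset[of _ "E \<times> E"]) (use fE in auto)
  have sub: "{T. T \<subseteq> E \<and> card T = k} - goodk E k \<subseteq> (\<Union>p\<in>P. B p)"
  proof
    fix T assume "T \<in> {T. T \<subseteq> E \<and> card T = k} - goodk E k"
    then have T: "T \<subseteq> E" "card T = k" and ng: "\<not> (\<forall>e1\<in>T. \<forall>e2\<in>T. e1 \<noteq> e2 \<longrightarrow> e1 \<inter> e2 = {})"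
      unfolding goodk_def by auto
    then obtain e1 e2 where e: "e1 \<in> T" "e2 \<in> T" "e1 \<noteq> e2" "e1 \<inter> e2 \<noteq> {}" by blast
    then have "(e1, e2) \<in> P" unfolding P_def using T by auto
    moreover have "T \<in> B (e1, e2)" unfolding B_def using T e by simp
    ultimately show "T \<in> (\<Union>p\<in>P. B p)" by blast
  qed
  have cB: "card (B p) \<le> card E ^ (k - 2)" if p: "p \<in> P" for p
  proof -
    obtain e1 e2 where p': "p = (e1, e2)" "e1 \<in> E" "e2 \<in> E" "e1 \<noteq> e2" using p unfolding P_def by auto
    have "inj_on (\<lambda>T. T - {e1, e2}) (B p)"
    proof (rule inj_onI)
      fix T1 T2 assume "T1 \<in> B p" "T2 \<in> B p" "T1 - {e1, e2} = T2 - {e1, e2}"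
      then show "T1 = T2" unfolding B_def p' by auto
    qed
    moreover have "(\<lambda>T. T - {e1, e2}) ` B p \<subseteq> {S. S \<subseteq> E \<and> card S = k - 2}"
    proof
      fix S assume "S \<in> (\<lambda>T. T - {e1, e2}) ` B p"
      then obtain T where T: "T \<in> B p" "S = T - {e1, e2}" by blast
      then have T': "T \<subseteq> E" "card T = k" "e1 \<in> T" "e2 \<in> T" unfolding B_def p' by auto
      have "finite T" using finite_subset[OF T'(1) fE] .
      then have "card (T - {e1, e2}) = card T - card {e1, e2}" using T' by (intro card_Diff_subset) auto
      then have "card S = k - 2" using T(2) T'(2) p'(4) by simp
      then show "S \<in> {S. S \<subseteq> E \<and> card S = k - 2}" using T T' by auto
    qed
    ultimately have "card (B p) \<le> card {S. S \<subseteq> E \<and> card S = k - 2}"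
      by (rule card_inj_on_le[OF _ _ finite_ksets[OF fE]])
    also have "\<dots> = card E choose (k - 2)" by (rule n_subsets[OF fE])
    also have "\<dots> \<le> card E ^ (k - 2)" by (rule choose_le_pow)
    finally show ?thesis .
  qed
  have cP: "card P \<le> 2 * card V * card E"
  proof -
    define S where "S x = {e\<in>E. x \<in> e}" for x
    have "P \<subseteq> (\<Union>e1\<in>E. \<Union>x\<in>e1. {e1} \<times> S x)"
    proof
      fix p assume "p \<in> P"
      then obtain e1 e2 x where "p = (e1, e2)" "e1 \<in> E" "e2 \<in> E" "x \<in> e1" "x \<in> e2"
        unfolding P_def by blast
      then show "p \<in> (\<Union>e1\<in>E. \<Union>x\<in>e1. {e1} \<times> S x)" unfolding S_def by blast
    qed
    then have "card P \<le> card (\<Union>e1\<in>E. \<Union>x\<in>e1. {e1} \<times> S x)"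
    proof (rule card_mono[rotated])
      show "finite (\<Union>e1\<in>E. \<Union>x\<in>e1. {e1} \<times> S x)"
        by (rule finite_subset[of _ "E \<times> E"]) (use fE in \<open>auto simp: S_def\<close>)
    qed
    also have "\<dots> \<le> (\<Sum>e1\<in>E. card (\<Union>x\<in>e1. {e1} \<times> S x))" by (rule card_UN_le[OF fE])
    also have "\<dots> \<le> (\<Sum>e1\<in>E. 2 * card V)"
    proof (rule sum_mono)
      fix e1 assume e1: "e1 \<in> E"
      then obtain a b where ab: "a \<noteq> b" "e1 = {a, b}" using ed by meson
      have "card (\<Union>x\<in>e1. {e1} \<times> S x) \<le> (\<Sum>x\<in>e1. card ({e1} \<times> S x))"
        by (rule card_UN_le) (simp add: ab)
      also have "\<dots> \<le> (\<Sum>x\<in>e1. card V)"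
      proof (rule sum_mono)
        fix x show "card ({e1} \<times> S x) \<le> card V"
          using deg_le[OF ed fV, of x] unfolding S_def by (simp add: card_cartesian_product)
      qed
      also have "\<dots> = 2 * card V" using ab by simp
      finally show "card (\<Union>x\<in>e1. {e1} \<times> S x) \<le> 2 * card V" .
    qed
    also have "\<dots> = 2 * card V * card E" by simp
    finally show ?thesis .
  qed
  have "card ({T. T \<subseteq> E \<and> card T = k} - goodk E k) \<le> card (\<Union>p\<in>P. B p)"
  proof (rule card_mono[OF _ sub])
    show "finite (\<Union>p\<in>P. B p)" by (rule finite_subset[of _ "Pow E"]) (use fE in \<open>auto simp: B_def\<close>)
  qed
  also have "\<dots> \<le> (\<Sum>p\<in>P. card (B p))" by (rule card_UN_le[OF finP])
  also have "\<dots> \<le> (\<Sum>p\<in>P. card E ^ (k - 2))" by (rule sum_mono) (rule cB)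
  also have "\<dots> = card P * card E ^ (k - 2)" by simp
  also have "\<dots> \<le> 2 * card V * card E * card E ^ (k - 2)" using cP by (rule mult_right_mono) simp
  finally show ?thesis .
qed

lemma good_lower:
  assumes gG: "graph G" and k: "k \<ge> 1"
  shows "real (card (snd G) choose k) - 2 * real (card (fst G)) * real (card (snd G)) ^ (k - 1)
    \<le> real (count_copies (matching k) G)"
proof -
  let ?E = "snd G" and ?V = "fst G"
  have fE: "finite ?E" by (rule graph_finite_snd[OF gG])
  have fV: "finite ?V" using gG unfolding graph_def by simp
  have ed: "\<forall>e\<in>?E. \<exists>x y. x \<noteq> y \<and> e = {x, y} \<and> x \<in> ?V \<and> y \<in> ?V" using gG unfolding graph_def by simp
  let ?K = "{T. T \<subseteq> ?E \<and> card T = k}"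
  have gs: "goodk ?E k \<subseteq> ?K" unfolding goodk_def by auto
  have fK: "finite ?K" by (rule finite_ksets[OF fE])
  have "card ?K = card (goodk ?E k) + card (?K - goodk ?E k)"
    using card_Diff_subset[OF finite_subset[OF gs fK] gs] card_mono[OF fK gs] by simp
  then have eq: "real (card ?E choose k) = real (card (goodk ?E k)) + real (card (?K - goodk ?E k))"
    using n_subsets[OF fE, of k] by simp
  have bb: "real (card (?K - goodk ?E k)) \<le> 2 * real (card ?V) * real (card ?E) ^ (k - 1)"
  proof (cases "k = 1")
    case True
    have "?K - goodk ?E k = {}"
    proof -
      have "T \<in> goodk ?E k" if "T \<in> ?K" for T
      proof -
        have "card T = 1" "T \<subseteq> ?E" using that True by auto
        then obtain a where "T = {a}" by (auto simp: card_Suc_eq)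
        then show ?thesis unfolding goodk_def using that by auto
      qed
      then show ?thesis by blast
    qed
    then have "card (?K - goodk ?E k) = 0" by (simp only: card.empty)
    then show ?thesis by simp
  next
    case False
    then have k2: "k \<ge> 2" using k by simp
    have "card (?K - goodk ?E k) \<le> 2 * card ?V * card ?E * card ?E ^ (k - 2)"
      by (rule bad_bound[OF ed fV fE k2])
    also have "\<dots> = 2 * card ?V * card ?E ^ (k - 1)"
    proof -
      have "k - 1 = Suc (k - 2)" using k2 by simp
      then have "card ?E * card ?E ^ (k - 2) = card ?E ^ (k - 1)" by (simp only: power_Suc)
      then show ?thesis by (simp add: mult.assoc)
    qed
    finally have "real (card (?K - goodk ?E k)) \<le> real (2 * card ?V * card ?E ^ (k - 1))"
      by (simp only: of_nat_le_iff)
    then show ?thesis by simp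
  qed
  have "real (card (goodk ?E k)) \<le> real (count_copies (matching k) G)"
    using count_lower[OF gG] by simp
  then show ?thesis using eq bb by linarith
qed



definition deg :: "nat set set \<Rightarrow> nat \<Rightarrow> nat" where
  "deg E x = card {e\<in>E. x \<in> e}"

definition scf :: "nat \<Rightarrow> nat set set \<Rightarrow> bool" where
  "scf L E \<longleftrightarrow> (\<forall>vs. 3 \<le> length vs \<longrightarrow> length vs \<le> L \<longrightarrow> distinct vs \<longrightarrow>
     \<not> (\<forall>i<length vs. {vs ! i, vs ! ((i + 1) mod length vs)} \<in> E))"

definition Edges :: "nat \<Rightarrow> nat set set" where
  "Edges n = {{x, y} | x y. x \<noteq> y \<and> x < n \<and> y < n}"

fun reach :: "nat set set \<Rightarrow> nat \<Rightarrow> nat \<Rightarrow> nat set" where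
  "reach E u 0 = {u}"
| "reach E u (Suc j) = reach E u j \<union> {y. \<exists>x\<in>reach E u j. {x, y} \<in> E}"

lemma reach_mono_Suc: "reach E u j \<subseteq> reach E u (Suc j)"
  by auto

lemma reach_mono: "j \<le> j' \<Longrightarrow> reach E u j \<subseteq> reach E u j'"
proof (induction j' rule: dec_induct)
  case base then show ?case by simp
next
  case (step m) then show ?case using reach_mono_Suc by blast
qed

lemma reach_self: "u \<in> reach E u j"
  using reach_mono[of 0 j E u] by auto

lemma reach_trans: "z \<in> reach E y a \<Longrightarrow> reach E z b \<subseteq> reach E y (a + b)"
proof (induction b)
  case 0 then show ?case by simp
next
  case (Suc b)
  show ?case
  proof
    fix w assume "w \<in> reach E z (Suc b)"
    then have "w \<in> reach E z b \<or> (\<exists>x\<in>reach E z b. {x, w} \<in> E)" by simp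
    then show "w \<in> reach E y (a + Suc b)"
    proof
      assume "w \<in> reach E z b"
      then show ?thesis using Suc reach_mono_Suc[of E y "a + b"] by auto
    next
      assume "\<exists>x\<in>reach E z b. {x, w} \<in> E"
      then obtain x where "x \<in> reach E z b" "{x, w} \<in> E" by blast
      then have "x \<in> reach E y (a + b)" using Suc by blast
      then show ?thesis using \<open>{x, w} \<in> E\<close> by auto
    qed
  qed
qed

lemma reach_sym: "y \<in> reach E x j \<Longrightarrow> x \<in> reach E y j"
proof (induction j arbitrary: y)
  case 0 then show ?case by simp
next
  case (Suc j)
  from Suc.prems have "y \<in> reach E x j \<or> (\<exists>z\<in>reach E x j. {z, y} \<in> E)" by simp
  then show ?case
  proof
    assume "y \<in> reach E x j"
    then show ?thesis using Suc.IH reach_mono_Suc by blast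
  next
    assume "\<exists>z\<in>reach E x j. {z, y} \<in> E"
    then obtain z where z: "z \<in> reach E x j" "{z, y} \<in> E" by blast
    have xz: "x \<in> reach E z j" using Suc.IH[OF z(1)] .
    have "z \<in> reach E y 1" using z(2) by (auto simp: insert_commute)
    then have "reach E z j \<subseteq> reach E y (1 + j)" by (rule reach_trans)
    then have "reach E z j \<subseteq> reach E y (Suc j)" by (simp only: plus_1_eq_Suc)
    then show ?thesis using xz by blast
  qed
qed

lemma Edges_fin: "finite (Edges n)"
proof (rule finite_subset[of _ "Pow {0..<n}"])
  show "Edges n \<subseteq> Pow {0..<n}" unfolding Edges_def by auto
qed simp

lemma Edges_mem:
  assumes "{x, y} \<in> Edges n" shows "x < n \<and> y < n"
proof -
  obtain a b where ab: "{x, y} = {a, b}" "a < n" "b < n" using assms unfolding Edges_def by auto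
  have "x \<in> {a, b}" "y \<in> {a, b}" unfolding ab(1)[symmetric] by simp_all
  then show ?thesis using ab by auto
qed

lemma reach_card:
  assumes E: "E \<subseteq> Edges n" and dg: "\<forall>x. deg E x \<le> d" and u: "u < n"
  shows "finite (reach E u j) \<and> card (reach E u j) \<le> (d + 1) ^ j"
proof (induction j)
  case 0 then show ?case by simp
next
  case (Suc j)
  define N where "N x = {y. {x, y} \<in> E}" for x
  have fE: "finite E" using E Edges_fin finite_subset by blast
  have Nsub: "N x \<subseteq> {0..<n}" for x
  proof
    fix y assume "y \<in> N x"
    then have "{x, y} \<in> Edges n" using E unfolding N_def by auto
    then show "y \<in> {0..<n}" using Edges_mem by simp
  qed
  have cN: "card (N x) \<le> d" for x
  proof -
    have "inj_on (\<lambda>y. {x, y}) (N x)" by (auto simp: inj_on_def doubleton_eq_iff)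
    moreover have "(\<lambda>y. {x, y}) ` N x \<subseteq> {e\<in>E. x \<in> e}" unfolding N_def by auto
    moreover have "finite {e\<in>E. x \<in> e}" using fE by simp
    ultimately have "card (N x) \<le> card {e\<in>E. x \<in> e}" by (rule card_inj_on_le)
    then show ?thesis using dg unfolding deg_def by (meson le_trans)
  qed
  have "{y. \<exists>x\<in>reach E u j. {x, y} \<in> E} = (\<Union>x\<in>reach E u j. N x)" unfolding N_def by blast
  then have eq: "reach E u (Suc j) = reach E u j \<union> (\<Union>x\<in>reach E u j. N x)" by (simp only: reach.simps)
  have fin: "finite (reach E u j)" using Suc.IH by simp
  have "(\<Union>x\<in>reach E u j. N x) \<subseteq> {0..<n}" using Nsub by blast
  then have fU: "finite (\<Union>x\<in>reach E u j. N x)" by (rule finite_subset) simp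
  have c1: "card (reach E u (Suc j)) \<le> card (reach E u j) + card (\<Union>x\<in>reach E u j. N x)"
    unfolding eq by (rule card_Un_le)
  have "card (\<Union>x\<in>reach E u j. N x) \<le> (\<Sum>x\<in>reach E u j. card (N x))" by (rule card_UN_le[OF fin])
  also have "\<dots> \<le> (\<Sum>x\<in>reach E u j. d)" by (rule sum_mono) (rule cN)
  also have "\<dots> = card (reach E u j) * d" by simp
  finally have c2: "card (\<Union>x\<in>reach E u j. N x) \<le> card (reach E u j) * d" .
  have "card (reach E u (Suc j)) \<le> card (reach E u j) * (d + 1)" using c1 c2 by simp
  also have "\<dots> \<le> (d + 1) ^ j * (d + 1)" using Suc.IH by (intro mult_right_mono) auto
  also have "\<dots> = (d + 1) ^ Suc j" by simp
  finally have c: "card (reach E u (Suc j)) \<le> (d + 1) ^ Suc j" .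
  have "finite (reach E u (Suc j))" unfolding eq using fin fU by (rule finite_UnI)
  then show ?case using c by simp
qed

lemma mod_shift_ne:
  fixes i m t :: nat
  assumes "i < m" "0 < t" "t < m"
  shows "(i + t) mod m \<noteq> i"
proof (cases "i + t < m")
  case True
  then have "(i + t) mod m = i + t" by (simp add: mod_if)
  then show ?thesis using assms by simp
next
  case False
  then have "(i + t) mod m = i + t - m" using assms by (simp add: mod_if)
  then show ?thesis using assms False by simp
qed

lemma cycle_reach:
  assumes sE: "scf L E" and nE: "\<not> scf L (insert {u, w} E)"
  shows "w \<in> reach E u L"
proof -
  obtain vs where vs: "3 \<le> length vs" "length vs \<le> L" "distinct vs"
    and cyc: "\<forall>i<length vs. {vs ! i, vs ! ((i + 1) mod length vs)} \<in> insert {u, w} E"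
    using nE unfolding scf_def by blast
  define m where "m = length vs"
  have m3: "3 \<le> m" using vs unfolding m_def by simp
  define ed where "ed i = {vs ! i, vs ! ((i + 1) mod m)}" for i
  have cyc': "ed i \<in> insert {u, w} E" if "i < m" for i using cyc that unfolding ed_def m_def by simp
  obtain i where i: "i < m" "ed i \<notin> E"
    using sE vs unfolding scf_def ed_def m_def by blast
  then have ei: "ed i = {u, w}" using cyc' by blast
  define p where "p = (i + 1) mod m"
  have pm: "p < m" unfolding p_def using m3 by simp
  have vi: "{vs ! i, vs ! p} = {u, w}" using ei unfolding ed_def p_def by simp
  have neq: "ed q \<noteq> ed i" if q: "q < m" "q \<noteq> i" for q
  proof
    assume eq: "ed q = ed i"
    have iq1: "(q + 1) mod m < m" "(i + 1) mod m < m" using m3 by auto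
    have dvs: "vs ! a = vs ! b \<longleftrightarrow> a = b" if "a < m" "b < m" for a b
      using vs(3) that unfolding m_def by (simp add: nth_eq_iff_index_eq)
    from eq have "vs ! q = vs ! i \<or> (vs ! q = vs ! ((i + 1) mod m) \<and> vs ! ((q + 1) mod m) = vs ! i)"
      unfolding ed_def by (auto simp: doubleton_eq_iff)
    then show False
    proof
      assume "vs ! q = vs ! i" then show False using dvs[OF q(1) i(1)] q by simp
    next
      assume a: "vs ! q = vs ! ((i + 1) mod m) \<and> vs ! ((q + 1) mod m) = vs ! i"
      then have qe: "q = (i + 1) mod m" and q2: "(q + 1) mod m = i" using dvs iq1 q(1) i(1) by auto
      have "(q + 1) mod m = (i + 1 + 1) mod m" unfolding qe by (rule mod_add_left_eq)
      then have "(i + 2) mod m = i" using q2 by (simp add: add.assoc)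
      then show False using mod_shift_ne[of i m 2] i m3 by simp
    qed
  qed
  have walk: "vs ! ((p + j) mod m) \<in> reach E (vs ! p) j" if "j < m" for j
    using that
  proof (induction j)
    case 0 then show ?case using pm by (simp add: reach_self)
  next
    case (Suc j)
    define q where "q = (p + j) mod m"
    have qm: "q < m" unfolding q_def using m3 by simp
    have qi: "q \<noteq> i"
    proof -
      have "q = (i + (j + 1)) mod m" unfolding q_def p_def by (simp add: mod_add_left_eq add.assoc)
      then show ?thesis using mod_shift_ne[of i m "j + 1"] i Suc.prems by simp
    qed
    have "ed q \<in> E" using cyc'[OF qm] neq[OF qm qi] ei by auto
    moreover have "(q + 1) mod m = (p + Suc j) mod m" unfolding q_def using mod_add_left_eq[of "p + j" m 1] by simp
    ultimately have "{vs ! q, vs ! ((p + Suc j) mod m)} \<in> E" unfolding ed_def by simp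
    moreover have "vs ! q \<in> reach E (vs ! p) j" using Suc unfolding q_def by simp
    ultimately show ?case by auto
  qed
  have "(p + (m - 1)) mod m = i"
  proof -
    have "(p + (m - 1)) mod m = (i + 1 + (m - 1)) mod m" unfolding p_def by (simp add: mod_add_left_eq)
    also have "i + 1 + (m - 1) = i + m" using m3 by simp
    finally show ?thesis using i by simp
  qed
  then have "vs ! i \<in> reach E (vs ! p) (m - 1)" using walk[of "m - 1"] m3 by simp
  moreover have "m - 1 \<le> L" using vs(2) unfolding m_def by simp
  ultimately have r: "vs ! i \<in> reach E (vs ! p) L" using reach_mono[of "m - 1" L E "vs ! p"] by blast
  from vi have "(vs ! i = u \<and> vs ! p = w) \<or> (vs ! i = w \<and> vs ! p = u)" by (auto simp: doubleton_eq_iff)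
  then show ?thesis
  proof
    assume "vs ! i = u \<and> vs ! p = w" then show ?thesis using r reach_sym by auto
  next
    assume "vs ! i = w \<and> vs ! p = u" then show ?thesis using r by auto
  qed
qed


lemma Edges_card: "e \<in> Edges n \<Longrightarrow> card e = 2 \<and> e \<subseteq> {0..<n}"
  unfolding Edges_def by auto

lemma handshake:
  assumes E: "E \<subseteq> Edges n"
  shows "(\<Sum>x\<in>{0..<n}. deg E x) = 2 * card E"
proof -
  have fE: "finite E" using E Edges_fin finite_subset by blast
  have "(\<Sum>x\<in>{0..<n}. deg E x) = (\<Sum>x\<in>{0..<n}. \<Sum>e\<in>{e. e \<in> E \<and> x \<in> e}. (1::nat))"
    unfolding deg_def by simp
  also have "\<dots> = (\<Sum>e\<in>E. \<Sum>x\<in>{x. x \<in> {0..<n} \<and> x \<in> e}. (1::nat))"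
    by (rule sum.swap_restrict) (simp_all add: fE)
  also have "\<dots> = (\<Sum>e\<in>E. (2::nat))"
  proof (rule sum.cong[OF refl])
    fix e assume "e \<in> E"
    then have c: "card e = 2 \<and> e \<subseteq> {0..<n}" using E Edges_card by blast
    then have "{x. x \<in> {0..<n} \<and> x \<in> e} = e" by blast
    then show "(\<Sum>x\<in>{x. x \<in> {0..<n} \<and> x \<in> e}. (1::nat)) = 2" using c by simp
  qed
  also have "\<dots> = 2 * card E" by simp
  finally show ?thesis .
qed

lemma scf_empty: "scf L {}"
  unfolding scf_def by (metis empty_iff le_trans numeral_le_iff semiring_norm(68) zero_less_iff_neq_zero le0 not_numeral_le_zero Suc_le_eq length_greater_0_conv list.size(3) not_less_eq_eq)

lemma construct:
  assumes L: "L \<ge> 1"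
  shows "\<exists>E. E \<subseteq> Edges n \<and> scf L E \<and> d * n \<le> 2 * card E + d * (d + 1) ^ L"
proof -
  define Fam where "Fam = {E. E \<subseteq> Edges n \<and> (\<forall>x. deg E x \<le> d) \<and> scf L E}"
  have fF: "finite Fam" unfolding Fam_def
    by (rule finite_subset[of _ "Pow (Edges n)"]) (auto simp: Edges_fin)
  have "{} \<in> Fam" unfolding Fam_def deg_def using scf_empty by simp
  then have ne: "card ` Fam \<noteq> {}" by blast
  obtain E where EF: "E \<in> Fam" and Emax: "card E = Max (card ` Fam)"
    using Max_in[OF finite_imageI[OF fF] ne] by auto
  have maxE: "card E' \<le> card E" if "E' \<in> Fam" for E'
    unfolding Emax using fF that by simp
  have E: "E \<subseteq> Edges n" and dg: "\<forall>x. deg E x \<le> d" and sE: "scf L E" using EF unfolding Fam_def by auto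
  have fE: "finite E" using E Edges_fin finite_subset by blast
  define D where "D = {x\<in>{0..<n}. deg E x < d}"
  have cD: "card D \<le> (d + 1) ^ L"
  proof (cases "D = {}")
    case True then show ?thesis by simp
  next
    case False
    then obtain u where u: "u \<in> D" by blast
    then have un: "u < n" and ud: "deg E u < d" unfolding D_def by auto
    have "D \<subseteq> reach E u L"
    proof
      fix w assume w: "w \<in> D"
      then have wn: "w < n" and wd: "deg E w < d" unfolding D_def by auto
      show "w \<in> reach E u L"
      proof (cases "w = u")
        case True then show ?thesis by (simp add: reach_self)
      next
        case wu: False
        show ?thesis
        proof (cases "{u, w} \<in> E")
          case True
          then have "w \<in> reach E u 1" by simp
          then show ?thesis using reach_mono[OF L, of E u] by blast
        next
          case nin: False
          have "\<not> scf L (insert {u, w} E)"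
          proof
            assume sc: "scf L (insert {u, w} E)"
            have "insert {u, w} E \<subseteq> Edges n" using E un wn wu unfolding Edges_def by blast
            moreover have "\<forall>x. deg (insert {u, w} E) x \<le> d"
            proof
              fix x
              show "deg (insert {u, w} E) x \<le> d"
              proof (cases "x = u \<or> x = w")
                case True
                have "{e\<in>insert {u, w} E. x \<in> e} \<subseteq> insert {u, w} {e\<in>E. x \<in> e}" by blast
                then have "card {e\<in>insert {u, w} E. x \<in> e} \<le> card (insert {u, w} {e\<in>E. x \<in> e})"
                  by (rule card_mono[rotated]) (simp add: fE)
                also have "\<dots> \<le> Suc (card {e\<in>E. x \<in> e})" by (rule card_insert_le_m1) (simp_all add: fE)
                also have "\<dots> \<le> d" using True ud wd unfolding deg_def by auto
                finally show ?thesis unfolding deg_def .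
              next
                case False
                then have "{e\<in>insert {u, w} E. x \<in> e} = {e\<in>E. x \<in> e}" by auto
                then show ?thesis using dg unfolding deg_def by simp
              qed
            qed
            ultimately have "insert {u, w} E \<in> Fam" unfolding Fam_def using sc by simp
            then have "card (insert {u, w} E) \<le> card E" by (rule maxE)
            then show False using nin fE by simp
          qed
          then show ?thesis using cycle_reach[OF sE] by blast
        qed
      qed
    qed
    then have "card D \<le> card (reach E u L)" using reach_card[OF E dg un, of L] by (intro card_mono) auto
    also have "\<dots> \<le> (d + 1) ^ L" using reach_card[OF E dg un, of L] by simp
    finally show ?thesis .
  qed
  have Dsub: "D \<subseteq> {0..<n}" unfolding D_def by auto
  have "d * card ({0..<n} - D) = (\<Sum>x\<in>{0..<n} - D. d)" by simp
  also have "\<dots> \<le> (\<Sum>x\<in>{0..<n} - D. deg E x)" by (rule sum_mono) (auto simp: D_def)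
  also have "\<dots> \<le> (\<Sum>x\<in>{0..<n}. deg E x)" by (rule sum_mono2) auto
  also have "\<dots> = 2 * card E" by (rule handshake[OF E])
  finally have h: "d * card ({0..<n} - D) \<le> 2 * card E" .
  have "card ({0..<n} - D) = n - card D" using card_Diff_subset[OF finite_subset[OF Dsub] Dsub] by simp
  then have h2: "d * (n - card D) \<le> 2 * card E" using h by simp
  have "n \<le> (n - card D) + (d + 1) ^ L" using cD by linarith
  then have "d * n \<le> d * (n - card D) + d * (d + 1) ^ L"
    by (metis add_mult_distrib2 mult_le_mono2)
  then have "d * n \<le> 2 * card E + d * (d + 1) ^ L" using h2 by linarith
  then show ?thesis using E sE by blast
qed


lemma cycle_of_F:
  assumes "\<not> forest F"
  obtains vs where "length vs \<ge> 3" "distinct vs" "set vs \<subseteq> fst F"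
    "\<forall>i<length vs. {vs ! i, vs ! ((i + 1) mod length vs)} \<in> snd F"
  using assms unfolding forest_def has_cycle_def by blast

lemma scf_Ffree:
  assumes gF: "graph F" and nf: "\<not> forest F" and sc: "scf (card (fst F)) (snd G)"
  shows "F_free F G"
  unfolding F_free_def
proof
  assume "\<exists>H. subgraph H G \<and> isomorphic H F"
  then obtain H where sH: "subgraph H G" and iH: "isomorphic H F" by blast
  obtain f where bij: "bij_betw f (fst H) (fst F)" and
    iso: "\<forall>x\<in>fst H. \<forall>y\<in>fst H. {x, y} \<in> snd H \<longleftrightarrow> {f x, f y} \<in> snd F"
    using iH unfolding isomorphic_def by blast
  obtain vs where vs: "length vs \<ge> 3" "distinct vs" "set vs \<subseteq> fst F"
    and cyc: "\<forall>i<length vs. {vs ! i, vs ! ((i + 1) mod length vs)} \<in> snd F"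
    using cycle_of_F[OF nf] by blast
  have fF: "finite (fst F)" using gF unfolding graph_def by simp
  have lenF: "length vs \<le> card (fst F)"
    using card_mono[OF fF vs(3)] distinct_card[OF vs(2)] by simp
  let ?g = "inv_into (fst H) f"
  have bg: "bij_betw ?g (fst F) (fst H)" using bij by (rule bij_betw_inv_into)
  have fg: "f (?g x) = x" if "x \<in> fst F" for x
    using bij that by (meson bij_betw_inv_into_right)
  have gin: "?g x \<in> fst H" if "x \<in> fst F" for x using bij_betwE[OF bg] that by simp
  define ws where "ws = map ?g vs"
  have lw: "length ws = length vs" unfolding ws_def by simp
  have dw: "distinct ws" unfolding ws_def
    using vs(2) bij_betw_imp_inj_on[OF bg] vs(3) by (simp add: distinct_map inj_on_subset)
  have "\<forall>i<length ws. {ws ! i, ws ! ((i + 1) mod length ws)} \<in> snd G"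
  proof (intro allI impI)
    fix i assume i: "i < length ws"
    let ?j = "(i + 1) mod length vs"
    have j: "?j < length vs" by (rule mod_less_divisor) (use vs(1) in linarith)
    have a: "vs ! i \<in> fst F" "vs ! ?j \<in> fst F" using vs(3) i j lw by auto
    have "{?g (vs ! i), ?g (vs ! ?j)} \<in> snd H \<longleftrightarrow> {f (?g (vs ! i)), f (?g (vs ! ?j))} \<in> snd F"
      using iso gin[OF a(1)] gin[OF a(2)] by blast
    then have "{?g (vs ! i), ?g (vs ! ?j)} \<in> snd H" using fg[OF a(1)] fg[OF a(2)] cyc i lw by simp
    then have "{?g (vs ! i), ?g (vs ! ?j)} \<in> snd G" using sH unfolding subgraph_def by blast
    then show "{ws ! i, ws ! ((i + 1) mod length ws)} \<in> snd G" unfolding ws_def using i j lw by simp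
  qed
  moreover have "3 \<le> length ws" "length ws \<le> card (fst F)" using vs(1) lenF lw by auto
  ultimately show False using sc[unfolded scf_def, rule_format, of ws] dw by blast
qed

lemma card_F_ge1:
  assumes gF: "graph F" and nf: "\<not> forest F"
  shows "card (fst F) \<ge> 1"
proof -
  obtain vs where vs: "length vs \<ge> 3" "distinct vs" "set vs \<subseteq> fst F"
    and "\<forall>i<length vs. {vs ! i, vs ! ((i + 1) mod length vs)} \<in> snd F"
    using cycle_of_F[OF nf] by blast
  have fF: "finite (fst F)" using gF unfolding graph_def by simp
  have "length vs \<le> card (fst F)" using card_mono[OF fF vs(3)] distinct_card[OF vs(2)] by simp
  then show ?thesis using vs(1) by simp
qed

lemma graphs_on_fin: "finite (graphs_on n)"
proof (rule finite_subset[of _ "{{0..<n}} \<times> Pow (Pow {0..<n})"])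
  show "graphs_on n \<subseteq> {{0..<n}} \<times> Pow (Pow {0..<n})"
  proof
    fix G assume "G \<in> graphs_on n"
    then have g: "graph G" "fst G = {0..<n}" unfolding graphs_on_def by simp_all
    then have "snd G \<subseteq> Pow {0..<n}" using graph_snd_sub[OF g(1)] by simp
    then show "G \<in> {{0..<n}} \<times> Pow (Pow {0..<n})" using g(2) by (simp add: mem_Times_iff)
  qed
qed simp

lemma Edges_graph:
  assumes E: "E \<subseteq> Edges n"
  shows "({0..<n}, E) \<in> graphs_on n"
proof -
  have "graph ({0..<n}, E)" unfolding graph_def
  proof (intro conjI ballI)
    show "finite (fst ({0..<n}, E))" by simp
    fix e assume "e \<in> snd ({0..<n}, E)"
    then have "e \<in> Edges n" using E by auto
    then obtain x y where xy: "e = {x, y}" "x \<noteq> y" "x < n" "y < n" unfolding Edges_def by blast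
    then show "\<exists>x y. x \<noteq> y \<and> e = {x, y} \<and> x \<in> fst ({0..<n}, E) \<and> y \<in> fst ({0..<n}, E)"
      by (intro exI[of _ x] exI[of _ y]) simp
  qed
  then show ?thesis unfolding graphs_on_def by simp
qed

lemma Ffree_nonempty:
  assumes gF: "graph F" and nf: "\<not> forest F"
  shows "({0..<n}, {}) \<in> {G \<in> graphs_on n. F_free F G}"
  using Edges_graph[of "{}" n] scf_Ffree[OF gF nf, of "({0..<n}, {})"] scf_empty by simp

lemma ex_ge:
  assumes "G \<in> graphs_on n" "F_free F G"
  shows "card (snd G) \<le> ex n F"
  unfolding ex_def using assms graphs_on_fin by (intro Max_ge) auto

lemma ex_attained:
  assumes gF: "graph F" and nf: "\<not> forest F"
  obtains G where "G \<in> graphs_on n" "F_free F G" "card (snd G) = ex n F"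
proof -
  have fin: "finite ((\<lambda>G. card (snd G)) ` {G \<in> graphs_on n. F_free F G})" using graphs_on_fin by simp
  have ne: "(\<lambda>G. card (snd G)) ` {G \<in> graphs_on n. F_free F G} \<noteq> {}" using Ffree_nonempty[OF gF nf] by blast
  from Max_in[OF fin ne] show ?thesis using that unfolding ex_def by auto
qed

lemma exgen_attained:
  assumes gF: "graph F" and nf: "\<not> forest F"
  obtains G where "G \<in> graphs_on n" "F_free F G" "count_copies H G = ex_gen n H F"
proof -
  have fin: "finite ((\<lambda>G. count_copies H G) ` {G \<in> graphs_on n. F_free F G})" using graphs_on_fin by simp
  have ne: "(\<lambda>G. count_copies H G) ` {G \<in> graphs_on n. F_free F G} \<noteq> {}" using Ffree_nonempty[OF gF nf] by blast
  from Max_in[OF fin ne] show ?thesis using that unfolding ex_gen_def by auto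
qed

lemma exgen_ge:
  assumes "G \<in> graphs_on n" "F_free F G"
  shows "count_copies H G \<le> ex_gen n H F"
  unfolding ex_gen_def using assms graphs_on_fin by (intro Max_ge) auto

lemma ex_lower:
  assumes gF: "graph F" and nf: "\<not> forest F"
  shows "d * n \<le> 2 * ex n F + d * (d + 1) ^ card (fst F)"
proof -
  obtain E where E: "E \<subseteq> Edges n" "scf (card (fst F)) E" and
    b: "d * n \<le> 2 * card E + d * (d + 1) ^ card (fst F)"
    using construct[OF card_F_ge1[OF gF nf], of n d] by blast
  have "({0..<n}, E) \<in> graphs_on n" by (rule Edges_graph[OF E(1)])
  moreover have "F_free F ({0..<n}, E)" using scf_Ffree[OF gF nf] E(2) by simp
  ultimately have "card E \<le> ex n F" using ex_ge by fastforce
  then show ?thesis using b by linarith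
qed

lemma exgen_upper:
  assumes gF: "graph F" and nf: "\<not> forest F"
  shows "real (ex_gen n (matching k) F) \<le> real (ex n F) ^ k / fact k"
proof -
  obtain G where G: "G \<in> graphs_on n" "F_free F G" "count_copies (matching k) G = ex_gen n (matching k) F"
    using exgen_attained[OF gF nf] by blast
  have gG: "graph G" using G(1) unfolding graphs_on_def by simp
  have "ex_gen n (matching k) F \<le> card (snd G) choose k" using count_upper[OF gG, of k] G(3) by simp
  then have "ex_gen n (matching k) F * fact k \<le> card (snd G) ^ k"
    using binomial_fact_pow[of "card (snd G)" k] by (meson le_trans mult_le_mono1)
  also have "\<dots> \<le> ex n F ^ k" using ex_ge[OF G(1) G(2)] by (simp add: power_mono)
  finally have "real (ex_gen n (matching k) F * fact k) \<le> real (ex n F ^ k)" by (simp only: of_nat_le_iff)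
  then have "real (ex_gen n (matching k) F) * fact k \<le> real (ex n F) ^ k" by simp
  then show ?thesis by (simp add: field_simps)
qed

lemma exgen_lower:
  assumes gF: "graph F" and nf: "\<not> forest F" and k: "k \<ge> 1"
  shows "real (ex n F choose k) - 2 * real n * real (ex n F) ^ (k - 1) \<le> real (ex_gen n (matching k) F)"
proof -
  obtain G where G: "G \<in> graphs_on n" "F_free F G" "card (snd G) = ex n F"
    using ex_attained[OF gF nf] by blast
  have gG: "graph G" and fG: "fst G = {0..<n}" using G(1) unfolding graphs_on_def by auto
  have "real (ex n F choose k) - 2 * real n * real (ex n F) ^ (k - 1) \<le> real (count_copies (matching k) G)"
    using good_lower[OF gG k] G(3) fG by simp
  also have "\<dots> \<le> real (ex_gen n (matching k) F)" using exgen_ge[OF G(1) G(2)] by simp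
  finally show ?thesis .
qed

lemma choose_lower:
  fixes e k :: nat
  assumes "k \<le> e"
  shows "(real e - real k) ^ k \<le> real (e choose k) * fact k"
proof -
  have "real (e choose k) * fact k = (\<Prod>i = 0..<k. real e - of_nat i)"
    by (simp add: binomial_gbinomial gbinomial_mult_fact')
  moreover have "(\<Prod>i = 0..<k. real e - real k) \<le> (\<Prod>i = 0..<k. real e - of_nat i)"
    by (rule prod_mono) (use assms in auto)
  ultimately show ?thesis by simp
qed


lemma ratio_lower:
  fixes e g C c nn :: real and k :: nat
  assumes e: "e > 0" and k: "k \<ge> 1" and c: "c > 0" and C: "(e - real k) ^ k \<le> C * c"
    and g: "C - 2 * nn * e ^ (k - 1) \<le> g"
  shows "((e - real k) / e) ^ k - 2 * c * (nn / e) \<le> g / (e ^ k / c)"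
proof -
  have ek: "e ^ k = e ^ (k - 1) * e" using k by (metis Suc_diff_le diff_Suc_1 power_Suc2 le_refl Suc_le_eq)
  have ekp: "e ^ k > 0" using e by simp
  have "(C - 2 * nn * e ^ (k - 1)) * c \<le> g * c" using g c by (intro mult_right_mono) auto
  then have "(e - real k) ^ k - 2 * c * nn * e ^ (k - 1) \<le> g * c" using C by (simp add: algebra_simps)
  then have "((e - real k) ^ k - 2 * c * nn * e ^ (k - 1)) / e ^ k \<le> g * c / e ^ k"
    using ekp by (intro divide_right_mono) auto
  moreover have "((e - real k) ^ k - 2 * c * nn * e ^ (k - 1)) / e ^ k
      = ((e - real k) / e) ^ k - 2 * c * (nn / e)"
  proof -
    have "(2 * c * nn * e ^ (k - 1)) / e ^ k = 2 * c * (nn / e)"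
      unfolding ek using e by (simp add: field_simps)
    moreover have "(e - real k) ^ k / e ^ k = ((e - real k) / e) ^ k" by (simp add: power_divide)
    ultimately show ?thesis by (simp add: diff_divide_distrib)
  qed
  moreover have "g / (e ^ k / c) = g * c / e ^ k" using c by simp
  ultimately show ?thesis by simp
qed

theorem mainTheorem17:
  fixes F :: "'a graph" and k :: nat
  assumes "graph F" and "\<not> forest F" and "k > 0"
  shows "(\<lambda>n. real (ex_gen n (matching k) F)) \<sim>[at_top] (\<lambda>n. real (ex n F) ^ k / fact k)"
proof -
  note gF = assms(1) and nf = assms(2)
  have k1: "k \<ge> 1" using assms(3) by simp
  define e where "e n = real (ex n F)" for n
  define L where "L = card (fst F)"
  define c :: real where "c = fact k"
  have cpos: "c > 0" unfolding c_def by simp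
  have key: "real d * real n \<le> 2 * e n + real d * (real d + 1) ^ L" for d n
  proof -
    have "real (d * n) \<le> real (2 * ex n F + d * (d + 1) ^ card (fst F))"
      using ex_lower[OF gF nf, of d n] by (simp only: of_nat_le_iff)
    then show ?thesis unfolding e_def L_def by (simp add: add.commute)
  qed
  have big: "real d * real n \<le> 4 * e n" if "2 * (d + 1) ^ L \<le> n" for d n
  proof -
    have "real (2 * (d + 1) ^ L) \<le> real n" using that by (simp only: of_nat_le_iff)
    then have "(real d + 1) ^ L \<le> real n / 2" by (simp add: add.commute)
    then have "real d * (real d + 1) ^ L \<le> real d * (real n / 2)" by (intro mult_left_mono) auto
    then show ?thesis using key[of d n] by linarith
  qed
  have lim_ne: "(\<lambda>n. real n / e n) \<longlonglongrightarrow> 0"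
  proof (rule LIMSEQ_I)
    fix r :: real assume r: "r > 0"
    obtain d :: nat where d: "8 / r < real d" using reals_Archimedean2 by blast
    have dpos: "real d > 0" using d r by (smt (verit) divide_pos_pos)
    have "\<forall>n\<ge>2 * (d + 1) ^ L + 1. norm (real n / e n - 0) < r"
    proof (intro allI impI)
      fix n assume n: "n \<ge> 2 * (d + 1) ^ L + 1"
      then have b: "real d * real n \<le> 4 * e n" using big by simp
      have npos: "real n > 0" using n by simp
      have epos: "e n > 0" using b dpos npos by (smt (verit) mult_pos_pos)
      have "real n / e n \<le> 4 / real d" using b epos dpos by (simp add: field_simps)
      also have "4 / real d < r" using d r dpos by (simp add: field_simps)
      finally have "real n / e n < r" .
      moreover have "real n / e n \<ge> 0" using epos by simp
      ultimately show "norm (real n / e n - 0) < r" by simp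
    qed
    then show "\<exists>no. \<forall>n\<ge>no. norm (real n / e n - 0) < r" by blast
  qed
  define N0 where "N0 = 2 * (1 + 1) ^ L + 4 * k + 1"
  have evN: "e n > 0 \<and> real k \<le> e n" if "n \<ge> N0" for n
  proof -
    have "real 1 * real n \<le> 4 * e n" using big[of 1 n] that unfolding N0_def by simp
    moreover have "real n \<ge> 4 * real k + 1" using that unfolding N0_def by simp
    ultimately show ?thesis by simp
  qed
  have ev: "eventually (\<lambda>n. e n > 0 \<and> real k \<le> e n \<and> n > 0) sequentially"
    unfolding eventually_sequentially using evN unfolding N0_def by fastforce
  have lim_inv: "(\<lambda>n. 1 / e n) \<longlonglongrightarrow> 0"
  proof -
    have "(\<lambda>n. (real n / e n) * (1 / real n)) \<longlonglongrightarrow> 0 * 0"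
      by (intro tendsto_mult lim_ne lim_1_over_n)
    moreover have "eventually (\<lambda>n. (real n / e n) * (1 / real n) = 1 / e n) sequentially"
      using ev by eventually_elim simp
    ultimately show ?thesis by (simp add: tendsto_cong)
  qed
  define lo where "lo n = (1 - real k * (1 / e n)) ^ k - 2 * c * (real n / e n)" for n
  have lim_lo: "lo \<longlonglongrightarrow> 1"
  proof -
    have "lo \<longlonglongrightarrow> (1 - real k * 0) ^ k - 2 * c * 0"
      unfolding lo_def by (intro tendsto_intros lim_inv lim_ne)
    then show ?thesis by simp
  qed
  define ratio where "ratio n = real (ex_gen n (matching k) F) / (real (ex n F) ^ k / fact k)" for n
  have ev_lo: "eventually (\<lambda>n. lo n \<le> ratio n) sequentially"
    using ev
  proof eventually_elim
    case (elim n)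
    then have epos: "e n > 0" and ek: "real k \<le> e n" by auto
    have kle: "k \<le> ex n F" using ek unfolding e_def by simp
    have C: "(e n - real k) ^ k \<le> real (ex n F choose k) * c"
      using choose_lower[OF kle] unfolding e_def c_def .
    have g: "real (ex n F choose k) - 2 * real n * e n ^ (k - 1) \<le> real (ex_gen n (matching k) F)"
      using exgen_lower[OF gF nf k1, of n] unfolding e_def .
    have "((e n - real k) / e n) ^ k - 2 * c * (real n / e n) \<le> real (ex_gen n (matching k) F) / (e n ^ k / c)"
      by (rule ratio_lower[OF epos k1 cpos C g])
    moreover have "(e n - real k) / e n = 1 - real k * (1 / e n)" using epos by (simp add: field_simps)
    ultimately show ?case unfolding lo_def ratio_def e_def c_def by simp
  qed
  have ev_hi: "eventually (\<lambda>n. ratio n \<le> 1) sequentially"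
    using ev
  proof eventually_elim
    case (elim n)
    then have epos: "e n > 0" by simp
    have le: "real (ex_gen n (matching k) F) \<le> real (ex n F) ^ k / fact k" by (rule exgen_upper[OF gF nf])
    have pos: "real (ex n F) ^ k / fact k > 0" using epos unfolding e_def by simp
    show ?case unfolding ratio_def by (simp only: divide_le_eq_1_pos[OF pos] le)
  qed
  have "ratio \<longlonglongrightarrow> 1"
    by (rule tendsto_sandwich[OF ev_lo ev_hi lim_lo tendsto_const])
  then show ?thesis unfolding ratio_def by (intro asymp_equivI') simp
qed

end
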